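(* Let $n,d\ge1$, let $\sigma$ be a reflection of $\mathbb{Z}_n^d$ (with specified half-spaces $H^+,H^-$), and let $X$ be a lazy simple random walk on $\mathbb{Z}_n^d$. Then for all $t\ge1$, all $b\in\mathbb{Z}_n^d$ and all sets $D_1,\dots,D_t\subseteq\mathbb{Z}_n^d$, \[ \mathbb{P}\big(X_1\in D_1,\dots,X_t\in D_t\,\big|\,X_0\in\{b\}\big)\le\mathbb{P}\big(X_1\in D_1^\sigma,\dots,X_t\in D_t^\sigma\,\big|\,X_0\in\{b\}^\sigma\big). \]
   Context: $\mathbb{Z}_n^d$ is equipped with the graph distance of the torus (nearest-neighbour graph). A reflection of a metric space $(M,d)$ is an isometry $\sigma:M\to M$ together with a decomposition $M=H^0\sqcup H^+\sqcup H^-$ such that $\sigma^2x=x$ for all $x$, $H^0$ is the set of fixed points of $\sigma$, $\sigma H^+=H^-$, and $d(x,y)<d(x,\sigma y)$ for all $x,y\in H^+$. The two-point rearrangement of a set $A\subseteq M$ is $A^\sigma$ defined by $A^\sigma\cap H^+=(A\cup\sigma A)\cap H^+$, $A^\sigma\cap H^-=(A\cap\sigma A)\cap H^-$, $A^\sigma\cap H^0=A\cap H^0$ (note $\{b\}^\sigma$ is again a singleton). The lazy simple random walk on $\mathbb{Z}_n^d$ stays put with probability $1/2$ and otherwise moves from $x$ to $x\pm e_i$ ($i=1,\dots,d$), each with probability $1/(4d)$. *)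

theory Defs
  imports Complex_Main "HOL-Library.FuncSet"
begin

text \<open>Points of the discrete torus Z_n^d are represented as functions nat => nat with
  coordinates x i < n for i < d and x i = 0 for i >= d (canonical representatives).\<close>

type_synonym point = "nat \<Rightarrow> nat"

definition torus :: "nat \<Rightarrow> nat \<Rightarrow> point set" where
  "torus n d = {x. (\<forall>i<d. x i < n) \<and> (\<forall>i\<ge>d. x i = 0)}"

definition cdist :: "nat \<Rightarrow> nat \<Rightarrow> nat \<Rightarrow> nat" where
  "cdist n a b = (let m = (if a \<ge> b then a - b else b - a) in min m (n - m))"

definition tdist :: "nat \<Rightarrow> nat \<Rightarrow> point \<Rightarrow> point \<Rightarrow> nat" where
  "tdist n d x y = (\<Sum>i<d. cdist n (x i) (y i))"

definition plus_e :: "nat \<Rightarrow> nat \<Rightarrow> point \<Rightarrow> point" where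
  "plus_e n i x = x(i := (x i + 1) mod n)"

definition minus_e :: "nat \<Rightarrow> nat \<Rightarrow> point \<Rightarrow> point" where
  "minus_e n i x = x(i := (x i + n - 1) mod n)"

definition reflection :: "nat \<Rightarrow> nat \<Rightarrow> (point \<Rightarrow> point) \<Rightarrow> point set \<Rightarrow> point set \<Rightarrow> point set \<Rightarrow> bool" where
  "reflection n d \<sigma> H0 Hp Hm \<longleftrightarrow>
     (\<forall>x\<in>torus n d. \<sigma> x \<in> torus n d) \<and>
     (\<forall>x\<in>torus n d. \<forall>y\<in>torus n d. tdist n d (\<sigma> x) (\<sigma> y) = tdist n d x y) \<and>
     (\<forall>x\<in>torus n d. \<sigma> (\<sigma> x) = x) \<and>
     H0 = {x\<in>torus n d. \<sigma> x = x} \<and>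
     H0 \<union> Hp \<union> Hm = torus n d \<and> H0 \<inter> Hp = {} \<and> H0 \<inter> Hm = {} \<and> Hp \<inter> Hm = {} \<and>
     \<sigma> ` Hp = Hm \<and>
     (\<forall>x\<in>Hp. \<forall>y\<in>Hp. tdist n d x y < tdist n d x (\<sigma> y))"

definition rearr :: "(point \<Rightarrow> point) \<Rightarrow> point set \<Rightarrow> point set \<Rightarrow> point set \<Rightarrow> point set \<Rightarrow> point set" where
  "rearr \<sigma> H0 Hp Hm A =
     ((A \<union> \<sigma> ` A) \<inter> Hp) \<union> ((A \<inter> \<sigma> ` A) \<inter> Hm) \<union> (A \<inter> H0)"

definition lazy_P :: "nat \<Rightarrow> nat \<Rightarrow> point \<Rightarrow> point \<Rightarrow> real" where
  "lazy_P n d x y = (if y = x then 1/2 else 0) +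
     (\<Sum>i<d. ((if y = plus_e n i x then 1 else 0) + (if y = minus_e n i x then 1 else 0)) / (4 * real d))"

definition walk_prob :: "nat \<Rightarrow> nat \<Rightarrow> point \<Rightarrow> (nat \<Rightarrow> point set) \<Rightarrow> nat \<Rightarrow> real" where
  "walk_prob n d b D t =
     (\<Sum>p\<in>(\<Pi>\<^sub>E k\<in>{1..t}. D k \<inter> torus n d).
        \<Prod>k\<in>{1..t}. lazy_P n d (if k = 1 then b else p (k - 1)) (p k))"

text \<open>Conditioning on X_0 in S for a singleton S = {c}: the probability started at c.\<close>
definition cond_walk_prob :: "nat \<Rightarrow> nat \<Rightarrow> point set \<Rightarrow> (nat \<Rightarrow> point set) \<Rightarrow> nat \<Rightarrow> real" where
  "cond_walk_prob n d S D t = walk_prob n d (the_elem S) D t"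

end

theory Submission
  imports Defs
begin



lemma finite_torus: "finite (torus n d)"
proof -
  have "torus n d \<subseteq> {f. \<forall>x. (x \<in> {..<d} \<longrightarrow> f x \<in> {..<n}) \<and> (x \<notin> {..<d} \<longrightarrow> f x = 0)}"
    by (auto simp: torus_def)
  then show ?thesis by (rule finite_subset) (rule finite_set_of_finite_funs, auto)
qed

lemma c0: "a < n \<Longrightarrow> b < n \<Longrightarrow> cdist n a b = 0 \<longleftrightarrow> a = b"
  by (auto simp: cdist_def Let_def min_def split: if_splits)

lemma c1: "2 \<le> n \<Longrightarrow> a < n \<Longrightarrow> cdist n a ((a+1) mod n) = 1"
proof (cases "a + 1 < n")
  case True then show ?thesis by (auto simp: cdist_def Let_def min_def)
next
  case False
  assume "2 \<le> n" "a < n"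
  then have "a + 1 = n" using False by auto
  then show ?thesis using \<open>2 \<le> n\<close> by (auto simp: cdist_def Let_def min_def)
qed

lemma c1': "2 \<le> n \<Longrightarrow> a < n \<Longrightarrow> cdist n a ((a+n-1) mod n) = 1"
proof (cases "a = 0")
  case True
  assume "2 \<le> n" "a < n"
  then show ?thesis using True by (auto simp: cdist_def Let_def min_def)
next
  case False
  assume "2 \<le> n" "a < n"
  then have "(a+n-1) mod n = a - 1"
    using False by (metis add.commute add_diff_assoc2 le_add_diff_inverse less_imp_diff_less less_one linorder_not_le mod_add_self2 mod_less)
  then show ?thesis using \<open>2 \<le> n\<close> False \<open>a < n\<close> by (auto simp: cdist_def Let_def min_def)
qed

lemma c1inv: assumes "a < n" "b < n" "cdist n a b = 1"
  shows "b = (a+1) mod n \<or> b = (a+n-1) mod n"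
proof (cases "a \<le> b")
  case True
  then have "b - a = 1 \<or> n - (b - a) = 1" using assms by (auto simp: cdist_def Let_def min_def split: if_splits)
  then show ?thesis
  proof
    assume "b - a = 1" then have "b = a + 1" using True by auto
    then show ?thesis using assms by auto
  next
    assume h: "n - (b - a) = 1"
    then have "a = 0" "b = n - 1" using assms True by auto
    then show ?thesis using assms by auto
  qed
next
  case False
  then have "a - b = 1 \<or> n - (a - b) = 1" using assms by (auto simp: cdist_def Let_def min_def split: if_splits)
  then show ?thesis
  proof
    assume "a - b = 1" then have "a + n - 1 = b + n" using False by auto
    then show ?thesis using assms by auto
  next
    assume h: "n - (a - b) = 1"
    then have "b = 0" "a = n - 1" using assms False by auto
    then have "a + 1 = n" using assms by auto
    then show ?thesis using \<open>b = 0\<close> by auto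
  qed
qed

lemma c3: fixes n a :: nat assumes "3 \<le> n" "a < n" shows "(a+1) mod n \<noteq> (a+n-1) mod n"
proof (cases "a = 0")
  case True then show ?thesis using assms by auto
next
  case False
  then have e: "(a+n-1) mod n = a - 1"
    using assms by (metis add_diff_assoc2 less_imp_diff_less less_one linorder_not_le mod_add_self2 mod_less)
  show ?thesis
  proof (cases "a + 1 < n")
    case True then show ?thesis using e False by auto
  next
    case F2: False
    then have "a + 1 = n" using assms by auto
    then show ?thesis using e assms by auto
  qed
qed




lemma torus_lt: "x \<in> torus n d \<Longrightarrow> i < d \<Longrightarrow> x i < n" by (simp add: torus_def)
lemma torus_ge: "x \<in> torus n d \<Longrightarrow> d \<le> i \<Longrightarrow> x i = 0" by (simp add: torus_def)

lemma t0: assumes "x \<in> torus n d" "y \<in> torus n d" shows "tdist n d x y = 0 \<longleftrightarrow> x = y"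
proof
  assume "tdist n d x y = 0"
  then have "\<forall>i<d. cdist n (x i) (y i) = 0" by (simp add: tdist_def)
  then have a: "\<And>i. i < d \<Longrightarrow> x i = y i" using c0 torus_lt[OF assms(1)] torus_lt[OF assms(2)] by blast
  have "x i = y i" for i
  proof (cases "i < d")
    case True then show ?thesis using a by blast
  next
    case False then show ?thesis using torus_ge[OF assms(1)] torus_ge[OF assms(2)] by simp
  qed
  then show "x = y" by (rule ext)
next
  assume "x = y" then show "tdist n d x y = 0"
    unfolding tdist_def using c0 torus_lt[OF assms(1)] by simp
qed

lemma tsingle: assumes "x \<in> torus n d" "i < d" "\<And>k. k \<noteq> i \<Longrightarrow> y k = x k"
  shows "tdist n d x y = cdist n (x i) (y i)"
proof -
  have "tdist n d x y = (\<Sum>k<d. if k = i then cdist n (x i) (y i) else 0)"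
    unfolding tdist_def
    apply (rule sum.cong, simp)
    using assms torus_lt c0 by auto
  also have "\<dots> = cdist n (x i) (y i)" using assms by simp
  finally show ?thesis .
qed

lemma tplus: "2 \<le> n \<Longrightarrow> x \<in> torus n d \<Longrightarrow> i < d \<Longrightarrow> tdist n d x (plus_e n i x) = 1"
  using c1[OF _ torus_lt[of x n d i]] by (subst tsingle[of x n d i]) (auto simp: plus_e_def)

lemma tminus: "2 \<le> n \<Longrightarrow> x \<in> torus n d \<Longrightarrow> i < d \<Longrightarrow> tdist n d x (minus_e n i x) = 1"
  using c1'[OF _ torus_lt[of x n d i]] by (subst tsingle[of x n d i]) (auto simp: minus_e_def)

lemma t1inv: assumes "x \<in> torus n d" "y \<in> torus n d" "tdist n d x y = 1"
  obtains i where "i < d" "cdist n (x i) (y i) = 1" "\<And>k. k \<noteq> i \<Longrightarrow> y k = x k"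
proof -
  from assms(3) obtain i where i: "i\<in>{..<d}" "cdist n (x i) (y i) = 1"
    "\<forall>k\<in>{..<d}. i \<noteq> k \<longrightarrow> cdist n (x k) (y k) = 0"
    unfolding tdist_def using sum_eq_1_iff[of "{..<d}"] by auto
  have "\<And>k. k \<noteq> i \<Longrightarrow> y k = x k"
  proof -
    fix k assume "k \<noteq> i"
    show "y k = x k"
    proof (cases "k < d")
      case True then show ?thesis using i(3) \<open>k \<noteq> i\<close> c0 torus_lt assms by fastforce
    next
      case False then show ?thesis using torus_ge assms by (metis linorder_not_le)
    qed
  qed
  then show ?thesis using that i by auto
qed

definition fP :: "nat \<Rightarrow> nat \<Rightarrow> nat \<Rightarrow> real" where
  "fP n d k = (if n = 1 then 1 else if k = 0 then 1/2 else if k = 1 then (if n = 2 then 2 else 1) / (4 * real d) else 0)"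

lemma fP_anti: assumes "d \<ge> 1" "k \<le> k'" shows "fP n d k' \<le> fP n d k"
proof -
  have "(if n = 2 then 2 else 1) / (4 * real d) \<le> (1::real)/2"
    using assms by (auto simp: field_simps)
  then show ?thesis using assms by (auto simp: fP_def)
qed

lemma fP_nonneg: "0 \<le> fP n d k" by (simp add: fP_def)

lemma kernel_n1: assumes "x \<in> torus 1 d" "y \<in> torus 1 d" "d \<ge> 1"
  shows "lazy_P 1 d x y = fP 1 d (tdist 1 d x y)"
proof -
  have xy: "x = y" using assms unfolding torus_def by (auto intro!: ext) (metis less_one not_le)
  have z: "x i = 0" for i using assms(1) unfolding torus_def by (cases "i < d") auto
  have px: "plus_e 1 i x = x" "minus_e 1 i x = x" for i
    using z by (auto simp: plus_e_def minus_e_def fun_upd_idem)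
  have "lazy_P 1 d x y = 1/2 + real d * (2 / (4 * real d))"
    unfolding lazy_P_def using xy px by simp
  also have "\<dots> = 1" using assms by (simp add: field_simps)
  finally show ?thesis by (simp add: fP_def)
qed

lemma kernel_n2: assumes "x \<in> torus n d" "y \<in> torus n d" "d \<ge> 1" "n \<ge> 2"
  shows "lazy_P n d x y = fP n d (tdist n d x y)"
proof -
  consider "y = x" | "y \<noteq> x" "tdist n d x y \<noteq> 1" | "tdist n d x y = 1" by blast
  then show ?thesis
  proof cases
    case 1
    have "x \<noteq> plus_e n i x" "x \<noteq> minus_e n i x" if "i < d" for i
      using tplus[OF assms(4) assms(1) that] tminus[OF assms(4) assms(1) that] t0[OF assms(1) assms(1)] by auto
    then have "lazy_P n d x y = 1/2" unfolding lazy_P_def using 1 by (auto intro!: sum.neutral)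
    moreover have "tdist n d x y = 0" using 1 t0[OF assms(1) assms(1)] by simp
    ultimately show ?thesis using assms(4) by (simp add: fP_def)
  next
    case 2
    have "y \<noteq> plus_e n i x" "y \<noteq> minus_e n i x" if "i < d" for i
      using tplus[OF assms(4) assms(1) that] tminus[OF assms(4) assms(1) that] 2 by auto
    then have "lazy_P n d x y = 0" unfolding lazy_P_def using 2 by (auto intro!: sum.neutral)
    moreover have "tdist n d x y \<noteq> 0" using 2 t0[OF assms(1,2)] by simp
    ultimately show ?thesis using assms(4) 2 by (simp add: fP_def)
  next
    case 3
    obtain i where i: "i < d" "cdist n (x i) (y i) = 1" "\<And>k. k \<noteq> i \<Longrightarrow> y k = x k"
      using t1inv[OF assms(1,2) 3] by blast
    have "x i \<noteq> y i" using i(2) c0[OF torus_lt[OF assms(1) i(1)] torus_lt[OF assms(2) i(1)]] by simp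
    then have yx: "y \<noteq> x" by metis
    have yeq: "y = x(i := y i)" using i(3) by (auto intro!: ext)
    have other: "y \<noteq> plus_e n j x \<and> y \<noteq> minus_e n j x" if "j \<noteq> i" for j
    proof -
      have "y i \<noteq> x i" using \<open>x i \<noteq> y i\<close> by simp
      moreover have "plus_e n j x i = x i" "minus_e n j x i = x i" using that by (simp_all add: plus_e_def minus_e_def)
      ultimately show ?thesis by metis
    qed
    have pe: "(y = plus_e n i x) = (y i = (x i + 1) mod n)"
      by (subst yeq) (auto simp: plus_e_def fun_eq_iff)
    have me: "(y = minus_e n i x) = (y i = (x i + n - 1) mod n)"
      by (subst yeq) (auto simp: minus_e_def fun_eq_iff)
    let ?c = "(if y = plus_e n i x then 1 else 0) + (if y = minus_e n i x then 1 else 0) :: real"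
    have c: "?c = (if n = 2 then 2 else 1)"
    proof (cases "n = 2")
      case True
      then show ?thesis using c1inv[OF torus_lt[OF assms(1) i(1)] torus_lt[OF assms(2) i(1)] i(2)] pe me by auto
    next
      case False
      then have "3 \<le> n" using assms by auto
      then show ?thesis using c3[OF \<open>3 \<le> n\<close> torus_lt[OF assms(1) i(1)]]
        c1inv[OF torus_lt[OF assms(1) i(1)] torus_lt[OF assms(2) i(1)] i(2)] pe me False by auto
    qed
    have "lazy_P n d x y = (\<Sum>j<d. ((if y = plus_e n j x then 1 else 0) + (if y = minus_e n j x then 1 else 0)) / (4 * real d))"
      unfolding lazy_P_def using yx by simp
    also have "\<dots> = (\<Sum>j<d. if j = i then ?c / (4 * real d) else 0)"
      apply (rule sum.cong[OF refl])
      subgoal for j using other[of j] by (cases "j = i") simp_all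
      done
    also have "\<dots> = ?c / (4 * real d)" using i(1) by simp
    finally have "lazy_P n d x y = ?c / (4 * real d)" .
    then have "lazy_P n d x y = (if n = 2 then 2 else 1) / (4 * real d)" by (simp only: c)
    then show ?thesis using 3 assms(4) by (simp add: fP_def)
  qed
qed

lemma kernel: assumes "x \<in> torus n d" "y \<in> torus n d" "d \<ge> 1" "n \<ge> 1"
  shows "lazy_P n d x y = fP n d (tdist n d x y)"
  using kernel_n1 kernel_n2 assms by (metis le_antisym not_less_eq_eq one_add_one plus_1_eq_Suc)




definition Pop :: "nat \<Rightarrow> nat \<Rightarrow> (point \<Rightarrow> real) \<Rightarrow> point \<Rightarrow> real" where
  "Pop n d u x = (\<Sum>y\<in>torus n d. lazy_P n d x y * u y)"

definition Wrel :: "nat \<Rightarrow> nat \<Rightarrow> (point \<Rightarrow> point) \<Rightarrow> point set \<Rightarrow> point set \<Rightarrow> (point \<Rightarrow> real) \<Rightarrow> (point \<Rightarrow> real) \<Rightarrow> bool" where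
  "Wrel n d \<sigma> H0 Hp u u' \<longleftrightarrow> (\<forall>x\<in>torus n d. 0 \<le> u x) \<and> (\<forall>x\<in>H0. u x \<le> u' x) \<and>
     (\<forall>x\<in>Hp. u x \<le> u' x \<and> u (\<sigma> x) \<le> u' x \<and> u x + u (\<sigma> x) \<le> u' x + u' (\<sigma> x))"

lemma ineqA: fixes p q a b a' b' :: real
  assumes "q \<le> p" "0 \<le> q" "a \<le> a'" "a + b \<le> a' + b'" shows "p*a + q*b \<le> p*a' + q*b'"
proof -
  have "0 \<le> (p-q)*(a'-a) + q*(a'+b'-a-b)" using assms by (intro add_nonneg_nonneg mult_nonneg_nonneg) auto
  then show ?thesis by (simp add: algebra_simps)
qed

lemma ineqB: fixes p q a b a' b' :: real
  assumes "q \<le> p" "0 \<le> q" "b \<le> a'" "a + b \<le> a' + b'" shows "q*a + p*b \<le> p*a' + q*b'"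
proof -
  have "0 \<le> (p-q)*(a'-b) + q*(a'+b'-a-b)" using assms by (intro add_nonneg_nonneg mult_nonneg_nonneg) auto
  then show ?thesis by (simp add: algebra_simps)
qed

context
  fixes n d :: nat and \<sigma> :: "point \<Rightarrow> point" and H0 Hp Hm :: "point set"
  assumes R: "reflection n d \<sigma> H0 Hp Hm" and n1: "n \<ge> 1" and d1: "d \<ge> 1"
begin

lemma Rd: "(\<forall>x\<in>torus n d. \<sigma> x \<in> torus n d)" "(\<forall>x\<in>torus n d. \<forall>y\<in>torus n d. tdist n d (\<sigma> x) (\<sigma> y) = tdist n d x y)"
  "(\<forall>x\<in>torus n d. \<sigma> (\<sigma> x) = x)" "H0 = {x\<in>torus n d. \<sigma> x = x}"
  "H0 \<union> Hp \<union> Hm = torus n d" "H0 \<inter> Hp = {}" "H0 \<inter> Hm = {}" "Hp \<inter> Hm = {}"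
  "\<sigma> ` Hp = Hm" "(\<forall>x\<in>Hp. \<forall>y\<in>Hp. tdist n d x y < tdist n d x (\<sigma> y))"
  by (fact R[unfolded reflection_def, THEN conjunct1], fact R[unfolded reflection_def, THEN conjunct2, THEN conjunct1], fact R[unfolded reflection_def, THEN conjunct2, THEN conjunct2, THEN conjunct1], fact R[unfolded reflection_def, THEN conjunct2, THEN conjunct2, THEN conjunct2, THEN conjunct1], fact R[unfolded reflection_def, THEN conjunct2, THEN conjunct2, THEN conjunct2, THEN conjunct2, THEN conjunct1], fact R[unfolded reflection_def, THEN conjunct2, THEN conjunct2, THEN conjunct2, THEN conjunct2, THEN conjunct2, THEN conjunct1], fact R[unfolded reflection_def, THEN conjunct2, THEN conjunct2, THEN conjunct2, THEN conjunct2, THEN conjunct2, THEN conjunct2, THEN conjunct1], fact R[unfolded reflection_def, THEN conjunct2, THEN conjunct2, THEN conjunct2, THEN conjunct2, THEN conjunct2, THEN conjunct2, THEN conjunct2, THEN conjunct1], fact R[unfolded reflection_def, THEN conjunct2, THEN conjunct2, THEN conjunct2, THEN conjunct2, THEN conjunct2, THEN conjunct2, THEN conjunct2, THEN conjunct2, THEN conjunct1], fact R[unfolded reflection_def, THEN conjunct2, THEN conjunct2, THEN conjunct2, THEN conjunct2, THEN conjunct2, THEN conjunct2, THEN conjunct2, THEN conjunct2, THEN conjunct2])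

lemma st: "x \<in> torus n d \<Longrightarrow> \<sigma> x \<in> torus n d" using Rd(1) by blast
lemma ss: "x \<in> torus n d \<Longrightarrow> \<sigma> (\<sigma> x) = x" using Rd(3) by blast
lemma iso: "x \<in> torus n d \<Longrightarrow> y \<in> torus n d \<Longrightarrow> tdist n d (\<sigma> x) (\<sigma> y) = tdist n d x y"
  using Rd(2) by blast
lemma H0_def': "H0 = {x\<in>torus n d. \<sigma> x = x}" by (rule Rd(4))
lemma Hunion: "H0 \<union> Hp \<union> Hm = torus n d" by (rule Rd(5))
lemma Hdisj: "H0 \<inter> Hp = {}" "H0 \<inter> Hm = {}" "Hp \<inter> Hm = {}" by (rule Rd(6), rule Rd(7), rule Rd(8))
lemma Himg: "\<sigma> ` Hp = Hm" by (rule Rd(9))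
lemma Hstrict: "x \<in> Hp \<Longrightarrow> y \<in> Hp \<Longrightarrow> tdist n d x y < tdist n d x (\<sigma> y)"
  using Rd(10) by blast

lemma Hp_t: "x \<in> Hp \<Longrightarrow> x \<in> torus n d" using Hunion by blast
lemma Hm_t: "x \<in> Hm \<Longrightarrow> x \<in> torus n d" using Hunion by blast
lemma H0_t: "x \<in> H0 \<Longrightarrow> x \<in> torus n d" using Hunion by blast
lemma H0_fix: "x \<in> H0 \<Longrightarrow> \<sigma> x = x" using H0_def' by blast
lemma sHp: "x \<in> Hp \<Longrightarrow> \<sigma> x \<in> Hm" using Himg by blast
lemma sHm: assumes "x \<in> Hm" shows "\<sigma> x \<in> Hp"
proof -
  obtain y where y: "y \<in> Hp" "x = \<sigma> y" using assms Himg by blast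
  then show ?thesis using ss[OF Hp_t[OF y(1)]] by simp
qed
lemma Hp_notm: "x \<in> Hp \<Longrightarrow> x \<notin> Hm" "x \<in> Hp \<Longrightarrow> x \<notin> H0" using Hdisj by blast+
lemma Hm_not: "x \<in> Hm \<Longrightarrow> x \<notin> Hp" "x \<in> Hm \<Longrightarrow> x \<notin> H0" using Hdisj by blast+

abbreviation "P \<equiv> lazy_P n d"

lemma Psym: "x \<in> torus n d \<Longrightarrow> y \<in> torus n d \<Longrightarrow> P (\<sigma> x) (\<sigma> y) = P x y"
  using kernel[OF st st d1 n1] kernel[of x n d y] iso d1 n1 by simp

lemma Pswap: "x \<in> torus n d \<Longrightarrow> y \<in> torus n d \<Longrightarrow> P (\<sigma> x) y = P x (\<sigma> y)"
  using Psym[of x "\<sigma> y"] st ss by simp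

lemma Pmono: "x \<in> Hp \<Longrightarrow> y \<in> Hp \<Longrightarrow> P x (\<sigma> y) \<le> P x y"
  using kernel[OF Hp_t st[OF Hp_t] d1 n1] kernel[OF Hp_t Hp_t d1 n1] Hstrict fP_anti[OF d1] less_imp_le
  by metis

lemma Pnonneg: "0 \<le> P x y"
  unfolding lazy_P_def by (intro add_nonneg_nonneg sum_nonneg divide_nonneg_nonneg) auto

lemma split_sum: "(\<Sum>y\<in>torus n d. g y) = (\<Sum>y\<in>Hp. g y + g (\<sigma> y)) + (\<Sum>z\<in>H0. g z)"
proof -
  have fin: "finite Hp" "finite Hm" "finite H0" using finite_torus Hunion by (metis finite_Un)+
  have "(\<Sum>y\<in>torus n d. g y) = (\<Sum>y\<in>Hp. g y) + (\<Sum>y\<in>Hm. g y) + (\<Sum>z\<in>H0. g z)"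
  proof -
    have "(\<Sum>y\<in>torus n d. g y) = (\<Sum>y\<in>H0 \<union> Hp. g y) + (\<Sum>y\<in>Hm. g y)"
      unfolding Hunion[symmetric] by (rule sum.union_disjoint) (use fin Hdisj in auto)
    also have "(\<Sum>y\<in>H0 \<union> Hp. g y) = (\<Sum>y\<in>H0. g y) + (\<Sum>y\<in>Hp. g y)"
      by (rule sum.union_disjoint) (use fin Hdisj in auto)
    finally show ?thesis by (simp add: ac_simps)
  qed
  also have "(\<Sum>y\<in>Hm. g y) = (\<Sum>y\<in>Hp. g (\<sigma> y))"
  proof -
    have "inj_on \<sigma> Hp" by (metis Hp_t inj_onI ss)
    then show ?thesis using Himg sum.reindex[of \<sigma> Hp g] by simp
  qed
  finally show ?thesis by (simp add: sum.distrib)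
qed

lemma Pop_split: "Pop n d u x = (\<Sum>y\<in>Hp. P x y * u y + P x (\<sigma> y) * u (\<sigma> y)) + (\<Sum>z\<in>H0. P x z * u z)"
  unfolding Pop_def by (rule split_sum)

lemma Pop_split_s: assumes "x \<in> torus n d"
  shows "Pop n d u (\<sigma> x) = (\<Sum>y\<in>Hp. P x (\<sigma> y) * u y + P x y * u (\<sigma> y)) + (\<Sum>z\<in>H0. P x z * u z)"
proof -
  have a: "P (\<sigma> x) y = P x (\<sigma> y)" "P (\<sigma> x) (\<sigma> y) = P x y" if "y \<in> Hp" for y
    using Pswap Psym assms Hp_t that by auto
  have b: "P (\<sigma> x) z = P x z" if "z \<in> H0" for z
    using Pswap assms H0_t H0_fix that by metis
  show ?thesis unfolding Pop_split using a b by (auto intro!: sum.cong arg_cong2[where f="(+)"])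
qed

lemma Pop_split_0: assumes "x \<in> H0"
  shows "Pop n d u x = (\<Sum>y\<in>Hp. P x y * (u y + u (\<sigma> y))) + (\<Sum>z\<in>H0. P x z * u z)"
proof -
  have a: "P x (\<sigma> y) = P x y" if "y \<in> Hp" for y
    using Pswap[of x y] assms Hp_t that H0_t H0_fix by metis
  show ?thesis unfolding Pop_split using a by (auto intro!: sum.cong simp: algebra_simps)
qed

lemma step2: assumes "Wrel n d \<sigma> H0 Hp u u'" shows "Wrel n d \<sigma> H0 Hp (Pop n d u) (Pop n d u')"
proof -
  note W = assms[unfolded Wrel_def]
  have u0: "\<And>y. y \<in> torus n d \<Longrightarrow> 0 \<le> u y" using W by blast
  have nn: "\<forall>x\<in>torus n d. 0 \<le> Pop n d u x"
    unfolding Pop_def using u0 Pnonneg by (auto intro!: sum_nonneg mult_nonneg_nonneg)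
  have z0: "P x z * u z \<le> P x z * u' z" if "z \<in> H0" for x z
    using W that Pnonneg by (auto intro: mult_left_mono)
  have h0: "\<forall>x\<in>H0. Pop n d u x \<le> Pop n d u' x"
  proof
    fix x assume x: "x \<in> H0"
    show "Pop n d u x \<le> Pop n d u' x"
      unfolding Pop_split_0[OF x]
      apply (intro add_mono sum_mono)
      subgoal for y using W Pnonneg by (intro mult_left_mono) auto
      subgoal for z using z0 by blast
      done
  qed
  have hp: "Pop n d u x \<le> Pop n d u' x \<and> Pop n d u (\<sigma> x) \<le> Pop n d u' x \<and>
     Pop n d u x + Pop n d u (\<sigma> x) \<le> Pop n d u' x + Pop n d u' (\<sigma> x)" if x: "x \<in> Hp" for x
  proof (intro conjI)
    have xt: "x \<in> torus n d" using x Hp_t by blast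
    have pq: "P x (\<sigma> y) \<le> P x y" "0 \<le> P x (\<sigma> y)" if "y \<in> Hp" for y
      using Pmono x that Pnonneg by auto
    show "Pop n d u x \<le> Pop n d u' x"
      unfolding Pop_split
      apply (rule add_mono)
      subgoal apply (rule sum_mono) subgoal for y using W pq[of y] by (intro ineqA) auto done
      subgoal apply (rule sum_mono) subgoal for z using z0 by blast done
      done
    show "Pop n d u (\<sigma> x) \<le> Pop n d u' x"
      unfolding Pop_split_s[OF xt] Pop_split[of u' x]
      apply (rule add_mono)
      subgoal apply (rule sum_mono) subgoal for y using W pq[of y] by (intro ineqB) auto done
      subgoal apply (rule sum_mono) subgoal for z using z0 by blast done
      done
    have "Pop n d u x + Pop n d u (\<sigma> x) = (\<Sum>y\<in>Hp. (P x y + P x (\<sigma> y)) * (u y + u (\<sigma> y))) + 2 * (\<Sum>z\<in>H0. P x z * u z)"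
      unfolding Pop_split_s[OF xt, of u] Pop_split[of u x] by (simp add: sum.distrib[symmetric] algebra_simps)
    also have "\<dots> \<le> (\<Sum>y\<in>Hp. (P x y + P x (\<sigma> y)) * (u' y + u' (\<sigma> y))) + 2 * (\<Sum>z\<in>H0. P x z * u' z)"
      apply (rule add_mono)
      subgoal apply (rule sum_mono) subgoal for y using W Pnonneg[of x y] Pnonneg[of x "\<sigma> y"]
          by (intro mult_left_mono) auto done
      subgoal apply (rule mult_left_mono) apply (rule sum_mono) subgoal for z using z0 by blast
        by simp
      done
    also have "\<dots> = Pop n d u' x + Pop n d u' (\<sigma> x)"
      unfolding Pop_split_s[OF xt, of u'] Pop_split[of u' x] by (simp add: sum.distrib[symmetric] algebra_simps)
    finally show "Pop n d u x + Pop n d u (\<sigma> x) \<le> Pop n d u' x + Pop n d u' (\<sigma> x)" .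
  qed
  show ?thesis unfolding Wrel_def using nn h0 hp by blast
qed

end



definition G :: "nat \<Rightarrow> nat \<Rightarrow> (nat \<Rightarrow> point set) \<Rightarrow> nat \<Rightarrow> nat \<Rightarrow> point \<Rightarrow> real" where
  "G n d D j m b = (\<Sum>p\<in>(\<Pi>\<^sub>E k\<in>{j..<j+m}. D k \<inter> torus n d).
        \<Prod>k\<in>{j..<j+m}. lazy_P n d (if k = j then b else p (k - 1)) (p k))"

lemma G0: "G n d D j 0 b = 1" by (simp add: G_def)

lemma GSuc: "G n d D j (Suc m) b = (\<Sum>y\<in>D j \<inter> torus n d. lazy_P n d b y * G n d D (Suc j) m y)"
proof -
  let ?S = "{Suc j..<Suc j+m}" and ?T = "\<lambda>k. D k \<inter> torus n d"
  let ?F = "\<lambda>p. \<Prod>k\<in>{j..<j+Suc m}. lazy_P n d (if k = j then b else p (k - 1)) (p k)"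
  have I: "{j..<j+Suc m} = insert j ?S" by auto
  have jn: "j \<notin> ?S" by auto
  have "G n d D j (Suc m) b = sum ?F ((\<lambda>(y, g). g(j := y)) ` (?T j \<times> Pi\<^sub>E ?S ?T))"
    unfolding G_def I[symmetric] by (simp only: I PiE_insert_eq)
  also have "\<dots> = (\<Sum>(y,g)\<in>?T j \<times> Pi\<^sub>E ?S ?T. ?F (g(j := y)))"
    by (subst sum.reindex[OF inj_combinator[OF jn]]) (simp add: case_prod_unfold)
  also have "\<dots> = (\<Sum>y\<in>?T j. \<Sum>g\<in>Pi\<^sub>E ?S ?T. ?F (g(j := y)))"
    by (rule sum.cartesian_product[symmetric])
  also have "\<dots> = (\<Sum>y\<in>?T j. lazy_P n d b y * G n d D (Suc j) m y)"
  proof (rule sum.cong[OF refl])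
    fix y assume y: "y \<in> ?T j"
    have "?F (g(j := y)) = lazy_P n d b y *
        (\<Prod>k\<in>?S. lazy_P n d (if k = Suc j then y else g (k - 1)) (g k))" for g
    proof -
      have "?F (g(j := y)) = lazy_P n d b y * (\<Prod>k\<in>?S. lazy_P n d (if k = j then b else (g(j:=y)) (k - 1)) ((g(j:=y)) k))"
        unfolding I by (subst prod.insert) auto
      also have "(\<Prod>k\<in>?S. lazy_P n d (if k = j then b else (g(j:=y)) (k - 1)) ((g(j:=y)) k))
          = (\<Prod>k\<in>?S. lazy_P n d (if k = Suc j then y else g (k - 1)) (g k))"
        by (rule prod.cong) auto
      finally show ?thesis .
    qed
    then show "(\<Sum>g\<in>Pi\<^sub>E ?S ?T. ?F (g(j := y))) = lazy_P n d b y * G n d D (Suc j) m y"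
      unfolding G_def by (simp add: sum_distrib_left)
  qed
  finally show ?thesis .
qed

lemma GSuc_Pop: "G n d D j (Suc m) = Pop n d (\<lambda>y. if y \<in> D j then G n d D (Suc j) m y else 0)"
proof
  fix b
  have "G n d D j (Suc m) b = (\<Sum>y\<in>torus n d \<inter> D j. lazy_P n d b y * G n d D (Suc j) m y)"
    unfolding GSuc by (simp add: Int_commute)
  also have "\<dots> = Pop n d (\<lambda>y. if y \<in> D j then G n d D (Suc j) m y else 0) b"
    unfolding Pop_def by (subst sum.inter_restrict[OF finite_torus]) (auto intro!: sum.cong)
  finally show "G n d D j (Suc m) b = Pop n d (\<lambda>y. if y \<in> D j then G n d D (Suc j) m y else 0) b" .
qed

context
  fixes n d :: nat and \<sigma> :: "point \<Rightarrow> point" and H0 Hp Hm :: "point set"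
  assumes R: "reflection n d \<sigma> H0 Hp Hm" and n1: "n \<ge> 1" and d1: "d \<ge> 1"
begin

lemma img_mem: assumes "A \<subseteq> torus n d" "a \<in> torus n d" shows "a \<in> \<sigma> ` A \<longleftrightarrow> \<sigma> a \<in> A"
proof
  assume "a \<in> \<sigma> ` A" then obtain c where "c \<in> A" "a = \<sigma> c" by blast
  then show "\<sigma> a \<in> A" using ss[OF R n1 d1] assms by auto
next
  assume "\<sigma> a \<in> A" then show "a \<in> \<sigma> ` A" using ss[OF R n1 d1, of a] assms by (metis image_eqI)
qed

lemma rearr_p: assumes "A \<subseteq> torus n d" "y \<in> Hp"
  shows "y \<in> rearr \<sigma> H0 Hp Hm A \<longleftrightarrow> y \<in> A \<or> \<sigma> y \<in> A"
    and "\<sigma> y \<in> rearr \<sigma> H0 Hp Hm A \<longleftrightarrow> y \<in> A \<and> \<sigma> y \<in> A"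
proof -
  have yt: "y \<in> torus n d" using Hp_t[OF R n1 d1] assms by blast
  have syt: "\<sigma> y \<in> Hm" using sHp[OF R n1 d1] assms by blast
  show "y \<in> rearr \<sigma> H0 Hp Hm A \<longleftrightarrow> y \<in> A \<or> \<sigma> y \<in> A"
    unfolding rearr_def using img_mem[OF assms(1) yt] assms(2) Hp_notm[OF R n1 d1] by blast
  have "\<sigma> y \<in> \<sigma> ` A \<longleftrightarrow> y \<in> A" using img_mem[OF assms(1) st[OF R n1 d1 yt]] ss[OF R n1 d1 yt] by simp
  then show "\<sigma> y \<in> rearr \<sigma> H0 Hp Hm A \<longleftrightarrow> y \<in> A \<and> \<sigma> y \<in> A"
    unfolding rearr_def using syt Hm_not[OF R n1 d1] by blast
qed

lemma rearr_0: "z \<in> H0 \<Longrightarrow> z \<in> rearr \<sigma> H0 Hp Hm A \<longleftrightarrow> z \<in> A"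
  unfolding rearr_def using Hdisj[OF R n1 d1] by blast

lemma step1: assumes "Wrel n d \<sigma> H0 Hp v v'" "A \<subseteq> torus n d"
  shows "Wrel n d \<sigma> H0 Hp (\<lambda>y. if y \<in> A then v y else 0) (\<lambda>y. if y \<in> rearr \<sigma> H0 Hp Hm A then v' y else 0)"
proof -
  note W = assms(1)[unfolded Wrel_def]
  have a: "\<forall>x\<in>torus n d. 0 \<le> (if x \<in> A then v x else 0)" using W by auto
  have b: "\<forall>x\<in>H0. (if x \<in> A then v x else 0) \<le> (if x \<in> rearr \<sigma> H0 Hp Hm A then v' x else 0)"
    using W rearr_0 by auto
  have c: "(if x \<in> A then v x else 0) \<le> (if x \<in> rearr \<sigma> H0 Hp Hm A then v' x else 0) \<and>
    (if \<sigma> x \<in> A then v (\<sigma> x) else 0) \<le> (if x \<in> rearr \<sigma> H0 Hp Hm A then v' x else 0) \<and>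
    (if x \<in> A then v x else 0) + (if \<sigma> x \<in> A then v (\<sigma> x) else 0) \<le>
    (if x \<in> rearr \<sigma> H0 Hp Hm A then v' x else 0) + (if \<sigma> x \<in> rearr \<sigma> H0 Hp Hm A then v' (\<sigma> x) else 0)"
    if x: "x \<in> Hp" for x
  proof -
    have xt: "x \<in> torus n d" "\<sigma> x \<in> torus n d" using Hp_t[OF R n1 d1 x] st[OF R n1 d1] by auto
    have h: "0 \<le> v x" "0 \<le> v (\<sigma> x)" "v x \<le> v' x" "v (\<sigma> x) \<le> v' x" "v x + v (\<sigma> x) \<le> v' x + v' (\<sigma> x)"
      using W xt x by auto
    show ?thesis using rearr_p[OF assms(2) x] h by auto
  qed
  show ?thesis unfolding Wrel_def using a b c by blast
qed

lemma mainW: "\<forall>j. (\<forall>k. j \<le> k \<longrightarrow> k < j + m \<longrightarrow> D k \<subseteq> torus n d) \<longrightarrow>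
   Wrel n d \<sigma> H0 Hp (G n d D j m) (G n d (\<lambda>k. rearr \<sigma> H0 Hp Hm (D k)) j m)"
proof (induction m)
  case 0 then show ?case by (simp add: G0 Wrel_def)
next
  case (Suc m)
  show ?case
  proof (intro allI impI)
    fix j assume h: "\<forall>k. j \<le> k \<longrightarrow> k < j + Suc m \<longrightarrow> D k \<subseteq> torus n d"
    then have "Wrel n d \<sigma> H0 Hp (G n d D (Suc j) m) (G n d (\<lambda>k. rearr \<sigma> H0 Hp Hm (D k)) (Suc j) m)"
      using Suc.IH by auto
    moreover have "D j \<subseteq> torus n d" using h by auto
    ultimately show "Wrel n d \<sigma> H0 Hp (G n d D j (Suc m)) (G n d (\<lambda>k. rearr \<sigma> H0 Hp Hm (D k)) j (Suc m))"
      unfolding GSuc_Pop by (intro step2[OF R n1 d1] step1)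
  qed
qed

end



theorem lemma3p2:
  fixes n d t :: nat and \<sigma> :: "point \<Rightarrow> point" and H0 Hp Hm :: "point set"
    and b :: point and D :: "nat \<Rightarrow> point set"
  assumes "n \<ge> 1" and "d \<ge> 1"
    and "reflection n d \<sigma> H0 Hp Hm"
    and "t \<ge> 1"
    and "b \<in> torus n d"
    and "\<forall>k\<in>{1..t}. D k \<subseteq> torus n d"
  shows "cond_walk_prob n d {b} D t
           \<le> cond_walk_prob n d (rearr \<sigma> H0 Hp Hm {b}) (\<lambda>k. rearr \<sigma> H0 Hp Hm (D k)) t"
proof -
  note R = assms(3) and n1 = assms(1) and d1 = assms(2)
  have wp: "walk_prob n d c E t = G n d E 1 t c" for c E
    unfolding walk_prob_def G_def by (simp add: atLeastLessThanSuc_atLeastAtMost)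
  have W: "Wrel n d \<sigma> H0 Hp (G n d D 1 t) (G n d (\<lambda>k. rearr \<sigma> H0 Hp Hm (D k)) 1 t)"
    using mainW[OF R n1 d1, of t D] assms(6) by auto
  let ?b = "if b \<in> Hm then \<sigma> b else b"
  have rb: "rearr \<sigma> H0 Hp Hm {b} = {?b}"
  proof -
    consider "b \<in> Hp" | "b \<in> Hm" | "b \<in> H0" using Hunion[OF R n1 d1] assms(5) by blast
    then show ?thesis
    proof cases
      case 1 then show ?thesis using sHp[OF R n1 d1] Hp_notm[OF R n1 d1] Hdisj[OF R n1 d1]
        unfolding rearr_def by auto
    next
      case 2
      have "\<sigma> b \<noteq> b" using 2 sHm[OF R n1 d1] Hm_not[OF R n1 d1] by metis
      then show ?thesis using 2 sHm[OF R n1 d1] Hm_not[OF R n1 d1] Hdisj[OF R n1 d1]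
        unfolding rearr_def by auto
    next
      case 3 then show ?thesis using H0_fix[OF R n1 d1] Hm_not[OF R n1 d1] Hdisj[OF R n1 d1]
        unfolding rearr_def by auto
    qed
  qed
  have "G n d D 1 t b \<le> G n d (\<lambda>k. rearr \<sigma> H0 Hp Hm (D k)) 1 t ?b"
  proof -
    consider "b \<in> Hp" | "b \<in> Hm" | "b \<in> H0" using Hunion[OF R n1 d1] assms(5) by blast
    then show ?thesis
    proof cases
      case 1 then show ?thesis using W Hp_notm[OF R n1 d1] unfolding Wrel_def by auto
    next
      case 2
      then have "\<sigma> b \<in> Hp" "\<sigma> (\<sigma> b) = b" using sHm[OF R n1 d1] ss[OF R n1 d1] Hm_t[OF R n1 d1] by auto
      then show ?thesis using W 2 unfolding Wrel_def by metis
    next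
      case 3 then show ?thesis using W Hm_not[OF R n1 d1] unfolding Wrel_def by auto
    qed
  qed
  then show ?thesis unfolding cond_walk_prob_def rb wp by simp
qed


end
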